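(* Assume $d'=1$ and $t\ge2$, and let $n,j\in[t]$ with $n\neq j$. For each $k_3\in[d]$ define the slice $M^{(k_3)}_{n,j}=\big(\tilde T_{(k_1,n),(k_2,n),(k_3,j)}\big)_{k_1,k_2\in[d]}$ where $\tilde T_{(k_1,n),(k_2,n),(k_3,j)}=y_{n,j}(\{k_1,k_2\},k_3)$. Then: (1) on the image of $\mu$, for fixed $j$ and $k_3$, $M^{(k_3)}_{n,j}=M^{(k_3)}_{n',j}$ for all $n,n'\ne j$; (2) on the image of $\mu$, every matrix $M(\lambda)=\sum_{k=1}^d\lambda_kM^{(k)}_{n,j}$, $\lambda\in\mathbb R^d$, has rank at most $2$; (3) for any row set $R=\{r_1,r_2,r_3\}\subseteq[d]$, column set $C=\{c_1,c_2,c_3\}\subseteq[d]$ and multiset $S\in\operatorname{Mult}_3([d])$, the cubic polynomial \[ \Delta^S_{R,C}=\sum_{(t_1,t_2,t_3)\in\operatorname{Perm}(S)}\det\big(\tilde T_{(r_p,n),(c_q,n),(t_p,j)}\big)_{p,q=1}^3 \] vanishes on the attention variety. (These are the coefficients of $\lambda_{s_1}\lambda_{s_2}\lambda_{s_3}$ in the $(R,C)$ $3\times3$ minor of $M(\lambda)$, indexed by $\binom d3^2\binom{d+2}3$ triples $(R,C,S)$.)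
   Context: Setup: $Q,K\in\mathbb R^{a\times d}$, $V\in\mathbb R^{1\times d}$, $A=K^\top Q$, $\varphi_W(X)=VX(X^\top AX)$ for $X=(x_{kn})\in\mathbb R^{d\times t}$. For $\mathcal A$ a size-2 multiset on $[d]$, $b\in[d]$, $n\ne j$: $c_{n,j}(\mathcal A,b)$ is the coefficient of $(\prod_{u\in\mathcal A}x_{un})x_{bj}$ in $\varphi_W(X)[1,j]$, and $y_{n,j}(\mathcal A,b)=c_{n,j}(\mathcal A,b)/|\operatorname{Perm}(\mathcal A)|$ with $\operatorname{Perm}$ the set of distinct orderings of a multiset. $\mu$ maps $W=(Q,K,V)$ to the array of all scaled coefficients (ambient coordinates carry the same names); the attention variety is the Zariski closure of $\operatorname{im}\mu$. $\operatorname{Mult}_3([d])$ is the set of size-3 multisets on $[d]$. *)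

theory Defs
  imports "Jordan_Normal_Form.DL_Rank" "HOL-Library.Poly_Mapping"
    "HOL-Combinatorics.Multiset_Permutations"
begin

(* Conventions: [d] = {0..<d}, [t] = {0..<t}, [a] = {0..<a} (0-based relabelling).
   d' = 1: V is a 1 x d row, represented as V :: nat => real (V k = V[1,k]).
   Q, K :: nat => nat => real with Q i k = Q[i,k], i in [a], k in [d]. *)

type_synonym monom = "(nat \<times> nat) \<Rightarrow>\<^sub>0 nat"
type_synonym rpoly = "monom \<Rightarrow>\<^sub>0 real"

(* the polynomial variable x_{k m} (entry of X in row k, column m) *)
definition xvar :: "nat \<Rightarrow> nat \<Rightarrow> rpoly" where
  "xvar k m = Poly_Mapping.single (Poly_Mapping.single (k, m) 1) 1"

definition pconst :: "real \<Rightarrow> rpoly" where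
  "pconst c = Poly_Mapping.single 0 c"

definition Amat :: "nat \<Rightarrow> (nat \<Rightarrow> nat \<Rightarrow> real) \<Rightarrow> (nat \<Rightarrow> nat \<Rightarrow> real) \<Rightarrow> nat \<Rightarrow> nat \<Rightarrow> real" where
  "Amat a Q K p q = (\<Sum>i<a. K i p * Q i q)"

(* phi_W(X)[1,j] = sum_m (V X)[1,m] * (X^T A X)[m,j], as a polynomial in the entries of X *)
definition phi_poly :: "nat \<Rightarrow> nat \<Rightarrow> nat \<Rightarrow> (nat \<Rightarrow> nat \<Rightarrow> real) \<Rightarrow> (nat \<Rightarrow> nat \<Rightarrow> real)
    \<Rightarrow> (nat \<Rightarrow> real) \<Rightarrow> nat \<Rightarrow> rpoly" where
  "phi_poly a d t Q K V j =
     (\<Sum>m<t. (\<Sum>k<d. pconst (V k) * xvar k m) *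
             (\<Sum>p<d. \<Sum>q<d. xvar p m * pconst (Amat a Q K p q) * xvar q j))"

definition coef_monom :: "nat multiset \<Rightarrow> nat \<Rightarrow> nat \<Rightarrow> nat \<Rightarrow> monom" where
  "coef_monom A b n j =
     sum_mset (image_mset (\<lambda>u. Poly_Mapping.single (u, n) 1) A) + Poly_Mapping.single (b, j) 1"

definition cnj :: "nat \<Rightarrow> nat \<Rightarrow> nat \<Rightarrow> (nat \<Rightarrow> nat \<Rightarrow> real) \<Rightarrow> (nat \<Rightarrow> nat \<Rightarrow> real)
    \<Rightarrow> (nat \<Rightarrow> real) \<Rightarrow> nat \<Rightarrow> nat \<Rightarrow> nat multiset \<Rightarrow> nat \<Rightarrow> real" where
  "cnj a d t Q K V n j A b = Poly_Mapping.lookup (phi_poly a d t Q K V j) (coef_monom A b n j)"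

definition ynj :: "nat \<Rightarrow> nat \<Rightarrow> nat \<Rightarrow> (nat \<Rightarrow> nat \<Rightarrow> real) \<Rightarrow> (nat \<Rightarrow> nat \<Rightarrow> real)
    \<Rightarrow> (nat \<Rightarrow> real) \<Rightarrow> nat \<Rightarrow> nat \<Rightarrow> nat multiset \<Rightarrow> nat \<Rightarrow> real" where
  "ynj a d t Q K V n j A b =
     cnj a d t Q K V n j A b / real (card (permutations_of_multiset A))"

type_synonym coord = "nat \<times> nat \<times> nat multiset \<times> nat"

definition valid_coord :: "nat \<Rightarrow> nat \<Rightarrow> coord \<Rightarrow> bool" where
  "valid_coord d t c = (case c of (n, j, A, b) \<Rightarrow>
      n < t \<and> j < t \<and> n \<noteq> j \<and> size A = 2 \<and> set_mset A \<subseteq> {..<d} \<and> b < d)"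

definition mu :: "nat \<Rightarrow> nat \<Rightarrow> nat \<Rightarrow>
    (nat \<Rightarrow> nat \<Rightarrow> real) \<times> (nat \<Rightarrow> nat \<Rightarrow> real) \<times> (nat \<Rightarrow> real) \<Rightarrow> coord \<Rightarrow> real" where
  "mu a d t W c = (case W of (Q, K, V) \<Rightarrow> case c of (n, j, A, b) \<Rightarrow>
      if valid_coord d t c then ynj a d t Q K V n j A b else 0)"

inductive_set polyfun :: "((coord \<Rightarrow> real) \<Rightarrow> real) set" where
  pf_const: "(\<lambda>x. c) \<in> polyfun"
| pf_var: "(\<lambda>x. x i) \<in> polyfun"
| pf_add: "f \<in> polyfun \<Longrightarrow> g \<in> polyfun \<Longrightarrow> (\<lambda>x. f x + g x) \<in> polyfun"
| pf_mult: "f \<in> polyfun \<Longrightarrow> g \<in> polyfun \<Longrightarrow> (\<lambda>x. f x * g x) \<in> polyfun"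

definition zariski_closure :: "(coord \<Rightarrow> real) set \<Rightarrow> (coord \<Rightarrow> real) set" where
  "zariski_closure S = {x. \<forall>f\<in>polyfun. (\<forall>y\<in>S. f y = 0) \<longrightarrow> f x = 0}"

definition attention_variety :: "nat \<Rightarrow> nat \<Rightarrow> nat \<Rightarrow> (coord \<Rightarrow> real) set" where
  "attention_variety a d t = zariski_closure (range (mu a d t))"

definition Tt :: "(coord \<Rightarrow> real) \<Rightarrow> nat \<Rightarrow> nat \<Rightarrow> nat \<Rightarrow> nat \<Rightarrow> nat \<Rightarrow> real" where
  "Tt x n j k1 k2 k3 = x (n, j, {#k1, k2#}, k3)"

definition Mslice :: "nat \<Rightarrow> (coord \<Rightarrow> real) \<Rightarrow> nat \<Rightarrow> nat \<Rightarrow> nat \<Rightarrow> real mat" where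
  "Mslice d x n j k3 = mat d d (\<lambda>(k1, k2). Tt x n j k1 k2 k3)"

definition Mlam :: "nat \<Rightarrow> (coord \<Rightarrow> real) \<Rightarrow> nat \<Rightarrow> nat \<Rightarrow> (nat \<Rightarrow> real) \<Rightarrow> real mat" where
  "Mlam d x n j lam = mat d d (\<lambda>(k1, k2). \<Sum>k<d. lam k * Mslice d x n j k $$ (k1, k2))"

end

theory Submission
  imports Defs
begin

lemma mon_eq:
  fixes k m p q k1 k2 k3 n j :: nat
  assumes "n \<noteq> j"
  shows "(Poly_Mapping.single (k,m) 1 + (Poly_Mapping.single (p,m) 1 + Poly_Mapping.single (q,j) 1) =
          Poly_Mapping.single (k1,n) 1 + Poly_Mapping.single (k2,n) 1 + Poly_Mapping.single (k3,j) (1::nat)) \<longleftrightarrow>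
         (m = n \<and> q = k3 \<and> ((k = k1 \<and> p = k2) \<or> (k = k2 \<and> p = k1)))" (is "?L = ?R \<longleftrightarrow> _")
proof
  assume E: "?L = ?R"
  have h: "Poly_Mapping.lookup ?L z = Poly_Mapping.lookup ?R z" for z :: "nat \<times> nat" using E by simp
  note ev = Poly_Mapping.lookup_add Poly_Mapping.lookup_single when_def
  have 0: "q = k3" using h[of "(q,j)"] assms unfolding ev by (auto split: if_splits)
  have 1: "q = k3 \<and> m \<noteq> j" using h[of "(k1,n)"] assms 0 unfolding ev by (auto split: if_splits)
  have 2: "m = n \<and> (k = k1 \<or> k = k2)" using h[of "(k,m)"] assms 1 unfolding ev by (auto split: if_splits)
  have 3: "p = k1 \<or> p = k2" using h[of "(p,m)"] assms 1 2 unfolding ev by (auto split: if_splits)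
  have 4: "k2 = k \<or> k2 = p" using h[of "(k2,n)"] assms 1 2 unfolding ev by (auto split: if_splits)
  have 5: "k1 = k \<or> k1 = p" using h[of "(k1,n)"] assms 1 2 unfolding ev by (auto split: if_splits)
  have 6: "k = k1 \<and> p = k2 \<or> k = k2 \<and> p = k1"
  proof (cases "k1 = k2")
    case True
    then show ?thesis using h[of "(k1,n)"] assms 1 2 3 unfolding ev by (auto split: if_splits)
  qed (use 2 3 4 5 in auto)
  show "m = n \<and> q = k3 \<and> ((k = k1 \<and> p = k2) \<or> (k = k2 \<and> p = k1))"
    using 1 2 6 by blast
next
  assume "m = n \<and> q = k3 \<and> ((k = k1 \<and> p = k2) \<or> (k = k2 \<and> p = k1))"
  then show "?L = ?R" by (auto simp: ac_simps)
qed


lemma phi_expand: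
  "phi_poly a d t Q K V j = (\<Sum>m<t. \<Sum>p<d. \<Sum>q<d. \<Sum>k<d.
     Poly_Mapping.single (Poly_Mapping.single (k,m) 1 + (Poly_Mapping.single (p,m) 1 + Poly_Mapping.single (q,j) 1))
       (V k * Amat a Q K p q))"
  unfolding phi_poly_def
  by (simp add: sum_distrib_left sum_distrib_right xvar_def pconst_def mult_single mult.assoc)

lemma cnj_val:
  assumes "n < t" "n \<noteq> j" "k1 < d" "k2 < d" "k3 < d"
  shows "cnj a d t Q K V n j {#k1,k2#} k3 =
     (if k1 = k2 then V k1 * Amat a Q K k1 k3 else V k1 * Amat a Q K k2 k3 + V k2 * Amat a Q K k1 k3)"
proof -
  have cm: "coef_monom {#k1,k2#} k3 n j = Poly_Mapping.single (k1,n) 1 + Poly_Mapping.single (k2,n) 1 + Poly_Mapping.single (k3,j) 1"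
    by (simp add: coef_monom_def)
  let ?A = "Amat a Q K"
  have "cnj a d t Q K V n j {#k1,k2#} k3 = (\<Sum>m<t. \<Sum>p<d. \<Sum>q<d. \<Sum>k<d.
     (if m = n \<and> q = k3 \<and> ((k = k1 \<and> p = k2) \<or> (k = k2 \<and> p = k1)) then V k * ?A p q else 0))"
    unfolding cnj_def phi_expand cm Poly_Mapping.lookup_sum Poly_Mapping.lookup_single when_def mon_eq[OF assms(2)]
    by (rule refl)
  also have "\<dots> = (\<Sum>m<t. if m = n then (\<Sum>p<d. \<Sum>k<d.
     (if ((k = k1 \<and> p = k2) \<or> (k = k2 \<and> p = k1)) then V k * ?A p k3 else 0)) else 0)"
  proof (rule sum.cong[OF refl])
    fix m assume "m \<in> {..<t}"
    show "(\<Sum>p<d. \<Sum>q<d. \<Sum>k<d.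
     (if m = n \<and> q = k3 \<and> ((k = k1 \<and> p = k2) \<or> (k = k2 \<and> p = k1)) then V k * ?A p q else 0)) =
      (if m = n then (\<Sum>p<d. \<Sum>k<d.
     (if ((k = k1 \<and> p = k2) \<or> (k = k2 \<and> p = k1)) then V k * ?A p k3 else 0)) else 0)"
    proof (cases "m = n")
      case True
      have "(\<Sum>q<d. \<Sum>k<d.
     (if m = n \<and> q = k3 \<and> ((k = k1 \<and> p = k2) \<or> (k = k2 \<and> p = k1)) then V k * ?A p q else 0)) =
        (\<Sum>q<d. if q = k3 then (\<Sum>k<d.
     (if ((k = k1 \<and> p = k2) \<or> (k = k2 \<and> p = k1)) then V k * ?A p k3 else 0)) else 0)" for p
        by (rule sum.cong[OF refl]) (auto simp add: True)
      then show ?thesis using True assms by simp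
    qed simp
  qed
  also have "\<dots> = (\<Sum>p<d. \<Sum>k<d.
     (if ((k = k1 \<and> p = k2) \<or> (k = k2 \<and> p = k1)) then V k * ?A p k3 else 0))"
    using assms by simp
  also have "\<dots> = (\<Sum>p<d. (if p = k2 then V k1 * ?A k2 k3 else 0) + (if p = k1 \<and> k1 \<noteq> k2 then V k2 * ?A k1 k3 else 0))"
    apply (rule sum.cong[OF refl])
    subgoal for p using assms by (cases "p = k2"; cases "p = k1"; simp)
    done
  also have "\<dots> = (if k1 = k2 then V k1 * ?A k1 k3 else V k1 * ?A k2 k3 + V k2 * ?A k1 k3)"
    using assms by (simp add: sum.distrib)
  finally show ?thesis .
qed
lemma det0: "det (mat 0 0 f) = (1::'a::comm_ring_1)"
  unfolding det_def by simp
lemma det_step: "det (mat (Suc n) (Suc n) f) = (\<Sum>i<Suc n. f (i,0) * ((-1)^i * det (mat n n (\<lambda>(i',j'). f (if i' < i then i' else Suc i', Suc j')))))" for f :: "nat\<times>nat \<Rightarrow> 'a::comm_ring_1"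
proof -
  have "det (mat (Suc n) (Suc n) f) = (\<Sum>i<Suc n. mat (Suc n) (Suc n) f $$ (i,0) * cofactor (mat (Suc n) (Suc n) f) i 0)"
    by (rule laplace_expansion_column) auto
  also have "... = (\<Sum>i<Suc n. f (i,0) * ((-1)^i * det (mat n n (\<lambda>(i',j'). f (if i' < i then i' else Suc i', Suc j')))))"
    apply (rule sum.cong[OF refl])
    apply (simp add: cofactor_def mat_delete_def)
    apply (intro arg_cong[where f="\<lambda>x. _ * (_ * x)"] arg_cong[where f=det])
    apply (rule eq_matI) apply auto
    done
  finally show ?thesis .
qed
lemma det3: "det (mat 3 3 f) = f(0,0)*(f(1,1)*f(2,2) - f(2,1)*f(1,2)) - f(1,0)*(f(0,1)*f(2,2)-f(2,1)*f(0,2)) + f(2,0)*(f(0,1)*f(1,2)-f(1,1)*f(0,2))" for f :: "nat\<times>nat \<Rightarrow> 'a::comm_ring_1"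
  by (simp add: numeral_3_eq_3 numeral_2_eq_2 det_step det0 algebra_simps)

lemma perms3: "permutations_of_multiset {#x,y,z#} = {[x,y,z],[x,z,y],[y,x,z],[y,z,x],[z,x,y],[z,y,x]}"
proof -
  have e1: "{#x,y,z#} - {#x#} = {#y,z#}" by simp
  have e2: "{#x,y,z#} - {#y#} = {#x,z#}" by (simp add: add_mset_commute)
  have e3: "{#x,y,z#} - {#z#} = {#x,y#}" by (simp add: add_mset_commute)
  have "permutations_of_multiset {#x,y,z#} = (\<Union>u\<in>{x,y,z}. (#) u ` permutations_of_multiset ({#x,y,z#} - {#u#}))"
    by (subst permutations_of_multiset_nonempty) auto
  also have "\<dots> = (#) x ` permutations_of_multiset ({#x,y,z#} - {#x#}) \<union> (#) y ` permutations_of_multiset ({#x,y,z#} - {#y#}) \<union> (#) z ` permutations_of_multiset ({#x,y,z#} - {#z#})"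
    by blast
  also have "\<dots> = {[x,y,z],[x,z,y],[y,x,z],[y,z,x],[z,x,y],[z,y,x]}"
    unfolding e1 e2 e3 permutations_of_multiset_doubleton by auto
  finally show ?thesis .
qed
definition H :: "(nat \<Rightarrow> real) \<Rightarrow> (nat \<Rightarrow> nat \<Rightarrow> real) \<Rightarrow> (nat \<Rightarrow> nat) \<Rightarrow> (nat \<Rightarrow> nat) \<Rightarrow> nat \<Rightarrow> nat \<Rightarrow> nat \<Rightarrow> real" where
 "H V A r c x y z = (let f = (\<lambda>p q s. V (r p) * A (c q) s + V (c q) * A (r p) (s::nat)) in
  f 0 0 x * (f 1 1 y * f 2 2 z - f 2 1 z * f 1 2 y) - f 1 0 y * (f 0 1 x * f 2 2 z - f 2 1 z * f 0 2 x)
   + f 2 0 z * (f 0 1 x * f 1 2 y - f 1 1 y * f 0 2 x))"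
lemma k1: "H V A r c x x x = 0"
  unfolding H_def Let_def by (simp add: algebra_simps)
lemma k2: "H V A r c x x z + H V A r c x z x + H V A r c z x x = 0"
  unfolding H_def Let_def by (simp add: algebra_simps)
lemma k3: "H V A r c x y z + H V A r c x z y + H V A r c y x z + H V A r c y z x + H V A r c z x y + H V A r c z y x = 0"
  unfolding H_def Let_def by (simp add: algebra_simps)

lemma key_sum: "(\<Sum>ts\<in>permutations_of_multiset {#x,y,z#}. H V A r c (ts!0) (ts!1) (ts!2)) = 0"
proof -
  let ?S = "{[x,y,z],[x,z,y],[y,x,z],[y,z,x],[z,x,y],[z,y,x]}"
  let ?h = "\<lambda>ts. H V A r c (ts!0) (ts!1) (ts!2)"
  have k2': "H V A r c x z x + H V A r c x x z + H V A r c z x x = 0" for x z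
    using k2[of V A r c x z] by (simp add: ac_simps)
  have "sum ?h ?S = 0"
  proof (cases "x = y")
    case xy: True
    show ?thesis
    proof (cases "x = z")
      case True
      have "?S = {[x,x,x]}" using xy True by auto
      then show ?thesis using k1[of V A r c x] by simp
    next
      case False
      have "?S = {[x,x,z],[x,z,x],[z,x,x]}" using xy False by auto
      then show ?thesis using k2[of V A r c x z] False by (simp add: ac_simps)
    qed
  next
    case xy: False
    show ?thesis
    proof (cases "x = z")
      case True
      have "?S = {[x,y,x],[x,x,y],[y,x,x]}" using xy True by auto
      then show ?thesis using k2'[of x y] xy by (simp add: ac_simps)
    next
      case xz: False
      show ?thesis
      proof (cases "y = z")
        case True
        have "?S = {[x,y,y],[y,x,y],[y,y,x]}" using True by auto
        then show ?thesis using k2[of V A r c y x] xy by (simp add: ac_simps)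
      next
        case False
        then show ?thesis using xy xz k3[of V A r c x y z] by (simp add: ac_simps)
      qed
    qed
  qed
  then show ?thesis unfolding perms3 .
qed

lemma det3_half: "det (mat 3 3 (\<lambda>pq. f pq / 2)) = det (mat 3 3 f) / (8::real)"
  unfolding det3 by (simp add: field_simps)

lemma det_H: "det (mat 3 3 (\<lambda>(p, q). V (r p) * A (c q) (ts!p) + V (c q) * A (r p) (ts!p))) =
   H V A r c (ts!0) (ts!1) (ts!2)"
  unfolding det3 H_def Let_def by simp

lemma mu_val:
  assumes "n < t" "j < t" "n \<noteq> j" "k1 < d" "k2 < d" "k3 < d"
  shows "mu a d t (Q,K,V) (n,j,{#k1,k2#},k3) = (V k1 * Amat a Q K k2 k3 + V k2 * Amat a Q K k1 k3) / 2"
proof -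
  have v: "valid_coord d t (n,j,{#k1,k2#},k3)" using assms by (simp add: valid_coord_def)
  have c: "card (permutations_of_multiset {#k1,k2#}) = (if k1 = k2 then 1 else 2)"
    by (simp add: permutations_of_multiset_doubleton)
  show ?thesis using v unfolding mu_def
    by (simp add: ynj_def cnj_val[OF assms(1,3,4,5,6)] c)
qed

lemma pf_diff: "f \<in> polyfun \<Longrightarrow> g \<in> polyfun \<Longrightarrow> (\<lambda>x. f x - g x) \<in> polyfun"
proof -
  assume f: "f \<in> polyfun" and g: "g \<in> polyfun"
  have "(\<lambda>x. f x + (\<lambda>x. -1) x * g x) \<in> polyfun"
    by (intro pf_add pf_mult pf_const f g)
  then show ?thesis by simp
qed

lemma pf_sum: "finite S \<Longrightarrow> (\<And>s. s \<in> S \<Longrightarrow> f s \<in> polyfun) \<Longrightarrow> (\<lambda>x. \<Sum>s\<in>S. f s x) \<in> polyfun"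
proof (induction S rule: finite_induct)
  case empty
  then show ?case using pf_const[of 0] by simp
next
  case (insert s S)
  have "(\<lambda>x. f s x + (\<Sum>s\<in>S. f s x)) \<in> polyfun"
    using insert by (intro pf_add) auto
  then show ?case using insert by simp
qed

lemma pf_det: "(\<lambda>x. det (mat 3 3 (\<lambda>(p,q). Tt x n j (r p) (c q) (ts!p)))) \<in> polyfun"
  unfolding det3 Tt_def by (simp only: case_prod_conv) (intro pf_add pf_mult pf_diff pf_var)

lemma closure_zero:
  "x \<in> attention_variety a d t \<Longrightarrow> f \<in> polyfun \<Longrightarrow> (\<And>W. f (mu a d t W) = 0) \<Longrightarrow> f x = 0"
  unfolding attention_variety_def zariski_closure_def by auto

lemma sum_entry:
  fixes lam V :: "nat \<Rightarrow> real" and A :: "nat \<Rightarrow> nat \<Rightarrow> real"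
  shows "(\<Sum>k<d. lam k * ((V i * A b k + V b * A i k) / 2)) =
     V i * ((\<Sum>k<d. lam k * A b k) / 2) + (\<Sum>k<d. lam k * A i k) * (V b / 2)"
proof -
  have "(\<Sum>k<d. lam k * ((V i * A b k + V b * A i k) / 2)) =
     (\<Sum>k<d. (V i / 2) * (lam k * A b k) + (V b / 2) * (lam k * A i k))"
    by (rule sum.cong[OF refl]) (simp add: field_simps)
  also have "\<dots> = (V i / 2) * (\<Sum>k<d. lam k * A b k) + (V b / 2) * (\<Sum>k<d. lam k * A i k)"
    by (simp only: sum.distrib sum_distrib_left)
  also have "\<dots> = V i * ((\<Sum>k<d. lam k * A b k) / 2) + (\<Sum>k<d. lam k * A i k) * (V b / 2)"
    by simp
  finally show ?thesis .
qed

theorem mainTheorem9: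
  fixes a d t n j :: nat
  assumes "t \<ge> 2" and "n < t" and "j < t" and "n \<noteq> j"
  shows
    "(\<forall>W k3 n1 n2. k3 < d \<longrightarrow> n1 < t \<longrightarrow> n2 < t \<longrightarrow> n1 \<noteq> j \<longrightarrow> n2 \<noteq> j \<longrightarrow>
        Mslice d (mu a d t W) n1 j k3 = Mslice d (mu a d t W) n2 j k3)
   \<and> (\<forall>W (lam :: nat \<Rightarrow> real).
        vec_space.rank d (Mlam d (mu a d t W) n j lam) \<le> 2)
   \<and> (\<forall>(r :: nat \<Rightarrow> nat) (c :: nat \<Rightarrow> nat) (S :: nat multiset).
        inj_on r {..<3} \<longrightarrow> r ` {..<3} \<subseteq> {..<d} \<longrightarrow>
        inj_on c {..<3} \<longrightarrow> c ` {..<3} \<subseteq> {..<d} \<longrightarrow>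
        size S = 3 \<longrightarrow> set_mset S \<subseteq> {..<d} \<longrightarrow>
        (\<forall>x \<in> attention_variety a d t.
           (\<Sum>ts\<in>permutations_of_multiset S.
              det (mat 3 3 (\<lambda>(p, q). Tt x n j (r p) (c q) (ts ! p)))) = 0))"
  
proof -
  have P1: "\<forall>W k3 n1 n2. k3 < d \<longrightarrow> n1 < t \<longrightarrow> n2 < t \<longrightarrow> n1 \<noteq> j \<longrightarrow> n2 \<noteq> j \<longrightarrow>
        Mslice d (mu a d t W) n1 j k3 = Mslice d (mu a d t W) n2 j k3"
  proof (intro allI impI)
    fix W :: "(nat \<Rightarrow> nat \<Rightarrow> real) \<times> (nat \<Rightarrow> nat \<Rightarrow> real) \<times> (nat \<Rightarrow> real)" and k3 n1 n2 :: nat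
    assume h: "k3 < d" "n1 < t" "n2 < t" "n1 \<noteq> j" "n2 \<noteq> j"
    obtain Q K V where W: "W = (Q,K,V)" by (cases W) auto
    show "Mslice d (mu a d t W) n1 j k3 = Mslice d (mu a d t W) n2 j k3"
      unfolding W Mslice_def
      by (rule eq_matI) (auto simp: Tt_def mu_val h assms)
  qed
  have P2: "\<forall>W (lam :: nat \<Rightarrow> real). vec_space.rank d (Mlam d (mu a d t W) n j lam) \<le> 2"
  proof (intro allI)
    fix W :: "(nat \<Rightarrow> nat \<Rightarrow> real) \<times> (nat \<Rightarrow> nat \<Rightarrow> real) \<times> (nat \<Rightarrow> real)" and lam :: "nat \<Rightarrow> real"
    obtain Q K V where W: "W = (Q,K,V)" by (cases W) auto
    define w where "w i = (\<Sum>k<d. lam k * Amat a Q K i k)" for i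
    define A1 where "A1 = mat d d (\<lambda>(i,k). V i * (w k / 2))"
    define A2 where "A2 = mat d d (\<lambda>(i,k). w i * (V k / 2))"
    have eq: "Mlam d (mu a d t W) n j lam = A1 + A2"
    proof (rule eq_matI)
      fix i k2 assume "i < dim_row (A1 + A2)" "k2 < dim_col (A1 + A2)"
      then have ik: "i < d" "k2 < d" by (auto simp: A1_def A2_def)
      have "Mlam d (mu a d t W) n j lam $$ (i,k2) = (\<Sum>k<d. lam k * Mslice d (mu a d t W) n j k $$ (i, k2))"
        using ik by (simp add: Mlam_def)
      also have "\<dots> = (\<Sum>k<d. lam k * ((V i * Amat a Q K k2 k + V k2 * Amat a Q K i k) / 2))"
        by (rule sum.cong[OF refl]) (simp add: Mslice_def Tt_def W mu_val ik assms)
      also have "\<dots> = (A1 + A2) $$ (i,k2)"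
        using ik sum_entry[where lam=lam and V=V and A="Amat a Q K" and i=i and b=k2 and d=d] by (simp add: A1_def A2_def w_def)
      finally show "Mlam d (mu a d t W) n j lam $$ (i,k2) = (A1 + A2) $$ (i,k2)" .
    qed (auto simp: Mlam_def A1_def A2_def)
    have c1: "A1 \<in> carrier_mat d d" "A2 \<in> carrier_mat d d" by (auto simp: A1_def A2_def)
    have "vec_space.rank d (A1 + A2) \<le> vec_space.rank d A1 + vec_space.rank d A2"
      by (rule vec_space.rank_subadditive[OF c1])
    moreover have "vec_space.rank d A1 \<le> 1"
      by (rule vec_space.rank_le_1_product_entries[OF c1(1), where f = V and g = "\<lambda>k. w k / 2"])
         (auto simp: A1_def)
    moreover have "vec_space.rank d A2 \<le> 1"
      by (rule vec_space.rank_le_1_product_entries[OF c1(2), where f = w and g = "\<lambda>k. V k / 2"])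
         (auto simp: A2_def)
    ultimately show "vec_space.rank d (Mlam d (mu a d t W) n j lam) \<le> 2" unfolding eq by linarith
  qed
  have P3: "\<forall>(r :: nat \<Rightarrow> nat) (c :: nat \<Rightarrow> nat) (S :: nat multiset).
        inj_on r {..<3} \<longrightarrow> r ` {..<3} \<subseteq> {..<d} \<longrightarrow>
        inj_on c {..<3} \<longrightarrow> c ` {..<3} \<subseteq> {..<d} \<longrightarrow>
        size S = 3 \<longrightarrow> set_mset S \<subseteq> {..<d} \<longrightarrow>
        (\<forall>x \<in> attention_variety a d t.
           (\<Sum>ts\<in>permutations_of_multiset S.
              det (mat 3 3 (\<lambda>(p, q). Tt x n j (r p) (c q) (ts ! p)))) = 0)"
  proof (intro allI impI ballI)
    fix r c :: "nat \<Rightarrow> nat" and S :: "nat multiset" and x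
    assume hr: "r ` {..<3} \<subseteq> {..<d}" and hc: "c ` {..<3} \<subseteq> {..<d}"
      and hS: "size S = 3" "set_mset S \<subseteq> {..<d}" and xv: "x \<in> attention_variety a d t"
    have rp: "r p < d" if "p < 3" for p using hr that by auto
    have cq: "c p < d" if "p < 3" for p using hc that by auto
    obtain xs where xs: "mset xs = S" using ex_mset by blast
    then have "length xs = 3" using hS by auto
    then obtain s1 s2 s3 where "xs = [s1,s2,s3]"
      by (auto simp: numeral_3_eq_3 length_Suc_conv)
    then have S: "S = {#s1,s2,s3#}" using xs by simp
    define F where "F = (\<lambda>x. \<Sum>ts\<in>permutations_of_multiset S.
              det (mat 3 3 (\<lambda>(p, q). Tt x n j (r p) (c q) (ts ! p))))"
    have Fp: "F \<in> polyfun" unfolding F_def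
      by (rule pf_sum) (auto intro: pf_det)
    have F0: "F (mu a d t W) = 0" for W
    proof -
      obtain Q K V where W: "W = (Q,K,V)" by (cases W) auto
      have each: "det (mat 3 3 (\<lambda>(p, q). Tt (mu a d t W) n j (r p) (c q) (ts ! p))) =
          H V (Amat a Q K) r c (ts!0) (ts!1) (ts!2) / 8" if ts: "ts \<in> permutations_of_multiset S" for ts
      proof -
        have "mset ts = S" using ts by (rule permutations_of_multisetD)
        then have lt: "length ts = 3" "set ts \<subseteq> {..<d}" using hS by auto
        have tp: "ts ! p < d" if "p < 3" for p
        proof -
          have "ts ! p \<in> set ts" using lt(1) that by simp
          then show ?thesis using lt(2) by blast
        qed
        let ?g = "\<lambda>(p, q). V (r p) * Amat a Q K (c q) (ts!p) + V (c q) * Amat a Q K (r p) (ts!p)"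
        have "mat 3 3 (\<lambda>(p, q). Tt (mu a d t W) n j (r p) (c q) (ts ! p)) = mat 3 3 (\<lambda>pq. ?g pq / 2)"
          by (rule eq_matI) (auto simp: Tt_def W mu_val assms tp rp cq)
        then have "det (mat 3 3 (\<lambda>(p, q). Tt (mu a d t W) n j (r p) (c q) (ts ! p))) = det (mat 3 3 ?g) / 8"
          by (simp only: det3_half)
        also have "\<dots> = H V (Amat a Q K) r c (ts!0) (ts!1) (ts!2) / 8"
          by (simp only: det_H)
        finally show ?thesis .
      qed
      have "F (mu a d t W) = (\<Sum>ts\<in>permutations_of_multiset S. H V (Amat a Q K) r c (ts!0) (ts!1) (ts!2) / 8)"
        unfolding F_def by (rule sum.cong[OF refl]) (rule each)
      also have "\<dots> = (\<Sum>ts\<in>permutations_of_multiset S. H V (Amat a Q K) r c (ts!0) (ts!1) (ts!2)) / 8"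
        by (simp add: sum_divide_distrib)
      also have "\<dots> = 0" unfolding S key_sum by simp
      finally show ?thesis .
    qed
    have "F x = 0" by (rule closure_zero[OF xv Fp F0])
    then show "(\<Sum>ts\<in>permutations_of_multiset S.
              det (mat 3 3 (\<lambda>(p, q). Tt x n j (r p) (c q) (ts ! p)))) = 0" unfolding F_def .
  qed
  show ?thesis using P1 P2 P3 by blast
qed

end
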